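(* If $\Theta\cdot\Gamma\vdash P$ and $\Gamma'\leqslant\Gamma$, then $\Theta\cdot\Gamma'\vdash P$.
   Context: Session types: $S::=B\mid T$ ($B$ basic types such as int, bool, unit, with a given subtyping $<:$); $T::=p\&_{i\in I}m_i(S_i).T_i\mid p\oplus_{i\in I}m_i(S_i).T_i\mid\mu t.T\mid t\mid\mathbf{end}$ (external/internal choice from/to role $p$ with $I\neq\emptyset$ and distinct labels; closed, guarded recursion; the distinguished label $\mathtt{crash}$ never in internal choice); $U::=T\mid\mathbf{stop}$. Subtyping $\leqslant$ is the largest relation with: $B\leqslant B'$ if $B<:B'$; $\mathbf{end}\leqslant\mathbf{end}$; $\mathbf{stop}\leqslant\mathbf{stop}$; $p\oplus_{i\in I\cup J}m_i(S_i).T_i\leqslant p\oplus_{i\in I}m_i(S'_i).T'_i$ if $S'_i\leqslant S_i$ and $T_i\leqslant T'_i$ for $i\in I$; $p\&_{i\in I}m_i(S_i).T_i\leqslant p\&_{i\in I\cup J}m_i(S'_i).T'_i$ if $S_i\leqslant S'_i$, $T_i\leqslant T'_i$ for $i\in I$, and ($|I|=1$ implies $m_i\neq\mathtt{crash}$ or $J=\emptyset$); $\mu t.T\leqslant T'$ if $T\{\mu t.T/t\}\leqslant T'$; $T\leqslant\mu t.T'$ if $T\leqslant T'\{\mu t.T'/t\}$. Processes: $c::=x\mid s[p]$, $d::=v\mid c$; $P::=\mathbf 0\mid(\nu s{:}\Gamma')P\mid P\mid P\mid c[q]\oplus m\langle d\rangle.P\mid c[q]\&_{i\in I}m_i(x_i).P_i\mid\mathbf{def}\,X(\tilde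 x{:}\tilde S)=P\,\mathbf{in}\,P\mid X\langle\tilde d\rangle\mid\mathbf{err}\mid s[p]^{\dagger}$ (crashed endpoint). Typing contexts: $\Gamma$ maps variables to $S$ and endpoints $s[p]$ to $U$; $\Theta$ maps process variables to type tuples; $\Gamma'\leqslant\Gamma$ iff $\mathrm{dom}(\Gamma')=\mathrm{dom}(\Gamma)$ and $\Gamma'(c)\leqslant\Gamma(c)$ for all $c$. Typing rules: $\Theta\vdash X{:}\tilde S$ if $\Theta(X)=\tilde S$; $\emptyset\vdash v{:}B$ if $v\in B$; $c{:}S\vdash c{:}S'$ if $S\leqslant S'$; $\mathrm{end}(c_1{:}S_1..c_n{:}S_n)$ iff each $S_i$ is basic or $S_i\leqslant\mathbf{end}$. $\mathrm{end}(\Gamma)\Rightarrow\Theta\cdot\Gamma\vdash\mathbf 0$; $\mathrm{end}(\Gamma)\Rightarrow\Theta\cdot\Gamma,s[p]{:}\mathbf{stop}\vdash s[p]^{\dagger}$; $\Theta\cdot\Gamma_1\vdash P_1,\ \Theta\cdot\Gamma_2\vdash P_2\Rightarrow\Theta\cdot\Gamma_1,\Gamma_2\vdash P_1\mid P_2$; $\Gamma_1\vdash c{:}q\oplus m(S).T$, $\Gamma_2\vdash d{:}S$, $S\not\leqslant\mathbf{end}$, $\Theta\cdot\Gamma,c{:}T\vdash P\Rightarrow\Theta\cdot\Gamma,\Gamma_1,\Gamma_2\vdash c[q]\oplus m\langle d\rangle.P$; $\Gamma_1\vdash c{:}q\&_{i\in I}m_i(S_i).T_i$, $\forall i\ \Theta\cdot\Gamma,y_i{:}S_i,c{:}T_i\vdash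 P_i\Rightarrow\Theta\cdot\Gamma,\Gamma_1\vdash c[q]\&_{i\in I}m_i(y_i).P_i$; $\Theta,X{:}\tilde S\cdot\tilde x{:}\tilde S\vdash P$ and $\Theta,X{:}\tilde S\cdot\Gamma\vdash Q\Rightarrow\Theta\cdot\Gamma\vdash\mathbf{def}\,X(\tilde x{:}\tilde S)=P\,\mathbf{in}\,Q$; $\Theta\vdash X{:}S_1..S_n$, $\mathrm{end}(\Gamma_0)$, $\Gamma_i\vdash d_i{:}S_i$, $S_i\not\leqslant\mathbf{end}$ $\Rightarrow\Theta\cdot\Gamma_0,\Gamma_1..\Gamma_n\vdash X\langle d_1..d_n\rangle$; if $\Gamma'=\{s[p]{:}T_p\}_{p\in I}$ satisfies a given safety predicate (an $(s;R)$-safety property, for some set of roles $R$), $s$ does not occur in $\Gamma$, and $\Theta\cdot\Gamma,\Gamma'\vdash P$, then $\Theta\cdot\Gamma\vdash(\nu s{:}\Gamma')P$. *)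

theory Defs
  imports Main
begin

type_synonym role = string
type_synonym label = string
type_synonym tvar = string
type_synonym var = string
type_synonym sess = string
type_synonym pvar = string

definition crash :: label where "crash = ''crash''"

text \<open>Raw syntax; well-formedness (closed, guarded, nonempty distinct choices,
  no crash label in internal choice, stop only at top level of U) is imposed below.
  'b is the type of basic types.\<close>

datatype 'b ty =
    TBase 'b
  | TExt role "(label \<times> 'b ty \<times> 'b ty) list"   (* p & m_i(S_i).T_i *)
  | TInt role "(label \<times> 'b ty \<times> 'b ty) list"   (* p (+) m_i(S_i).T_i *)
  | TMu tvar "'b ty"
  | TV tvar
  | TEnd
  | TStop

inductive free_in :: "tvar \<Rightarrow> 'b ty \<Rightarrow> bool" where
  "free_in t (TV t)"
| "free_in t T \<Longrightarrow> t \<noteq> t' \<Longrightarrow> free_in t (TMu t' T)"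
| "(m, S, T) \<in> set ts \<Longrightarrow> free_in t S \<Longrightarrow> free_in t (TExt p ts)"
| "(m, S, T) \<in> set ts \<Longrightarrow> free_in t T \<Longrightarrow> free_in t (TExt p ts)"
| "(m, S, T) \<in> set ts \<Longrightarrow> free_in t S \<Longrightarrow> free_in t (TInt p ts)"
| "(m, S, T) \<in> set ts \<Longrightarrow> free_in t T \<Longrightarrow> free_in t (TInt p ts)"

definition closed_ty :: "'b ty \<Rightarrow> bool" where
  "closed_ty T \<longleftrightarrow> (\<forall>t. \<not> free_in t T)"

inductive unguarded :: "tvar \<Rightarrow> 'b ty \<Rightarrow> bool" where
  "unguarded t (TV t)"
| "unguarded t T \<Longrightarrow> t \<noteq> t' \<Longrightarrow> unguarded t (TMu t' T)"

inductive is_sort :: "'b ty \<Rightarrow> bool" and is_sess :: "'b ty \<Rightarrow> bool" where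
  "is_sort (TBase b)"
| "is_sess T \<Longrightarrow> is_sort T"
| "is_sess TEnd"
| "is_sess (TV t)"
| "is_sess T \<Longrightarrow> \<not> unguarded t T \<Longrightarrow> is_sess (TMu t T)"
| "ts \<noteq> [] \<Longrightarrow> distinct (map fst ts) \<Longrightarrow>
   (\<forall>(m, S, T) \<in> set ts. is_sort S \<and> is_sess T) \<Longrightarrow> is_sess (TExt p ts)"
| "ts \<noteq> [] \<Longrightarrow> distinct (map fst ts) \<Longrightarrow> crash \<notin> fst ` set ts \<Longrightarrow>
   (\<forall>(m, S, T) \<in> set ts. is_sort S \<and> is_sess T) \<Longrightarrow> is_sess (TInt p ts)"

definition wf_sort :: "'b ty \<Rightarrow> bool" where
  "wf_sort S \<longleftrightarrow> is_sort S \<and> closed_ty S"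

definition wf_sess :: "'b ty \<Rightarrow> bool" where
  "wf_sess T \<longleftrightarrow> is_sess T \<and> closed_ty T"

definition wf_U :: "'b ty \<Rightarrow> bool" where
  "wf_U U \<longleftrightarrow> wf_sess U \<or> U = TStop"

text \<open>Substitution T{U/t}; only used with closed U, so no capture can occur.\<close>
primrec subst :: "tvar \<Rightarrow> 'b ty \<Rightarrow> 'b ty \<Rightarrow> 'b ty" where
  "subst t U (TBase b) = TBase b"
| "subst t U (TExt p ts) = TExt p (map (map_prod id (map_prod (subst t U) (subst t U))) ts)"
| "subst t U (TInt p ts) = TInt p (map (map_prod id (map_prod (subst t U) (subst t U))) ts)"
| "subst t U (TMu t' T) = (if t = t' then TMu t' T else TMu t' (subst t U T))"
| "subst t U (TV t') = (if t = t' then U else TV t')"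
| "subst t U TEnd = TEnd"
| "subst t U TStop = TStop"

coinductive subty :: "('b \<Rightarrow> 'b \<Rightarrow> bool) \<Rightarrow> 'b ty \<Rightarrow> 'b ty \<Rightarrow> bool"
  for bsub :: "'b \<Rightarrow> 'b \<Rightarrow> bool" where
  base: "bsub B B' \<Longrightarrow> subty bsub (TBase B) (TBase B')"
| "end": "subty bsub TEnd TEnd"
| stop: "subty bsub TStop TStop"
| int: "(\<forall>(m, S', T') \<in> set ys. \<exists>S T. (m, S, T) \<in> set xs \<and>
            subty bsub S' S \<and> subty bsub T T') \<Longrightarrow>
        subty bsub (TInt p xs) (TInt p ys)"
| ext: "(\<forall>(m, S, T) \<in> set xs. \<exists>S' T'. (m, S', T') \<in> set ys \<and>
            subty bsub S S' \<and> subty bsub T T') \<Longrightarrow>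
        (length xs = 1 \<and> fst (hd xs) = crash \<longrightarrow> fst ` set ys \<subseteq> fst ` set xs) \<Longrightarrow>
        subty bsub (TExt p xs) (TExt p ys)"
| muL: "subty bsub (subst t (TMu t T) T) T' \<Longrightarrow> subty bsub (TMu t T) T'"
| muR: "subty bsub T (subst t (TMu t T') T') \<Longrightarrow> subty bsub T (TMu t T')"

datatype chan = CVar var | CEp sess role

datatype 'v data = DVal 'v | DCh chan

datatype ('b, 'v) proc =
    PNil
  | Res sess "role \<Rightarrow> 'b ty option" "('b, 'v) proc"   (* (nu s:Gamma') P,  Gamma' = {s[p]:T_p} *)
  | Par "('b, 'v) proc" "('b, 'v) proc"
  | Send chan role label "'v data" "('b, 'v) proc"      (* c[q] (+) m<d>.P *)
  | Recv chan role "(label \<times> var \<times> ('b, 'v) proc) list" (* c[q] & m_i(x_i).P_i *)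
  | Def pvar "(var \<times> 'b ty) list" "('b, 'v) proc" "('b, 'v) proc"  (* def X(x:S) = P in Q *)
  | Call pvar "'v data list"
  | Err
  | Crashed sess role

type_synonym 'b ctx = "chan \<Rightarrow> 'b ty option"
type_synonym 'b pctx = "pvar \<Rightarrow> 'b ty list option"

inductive wf_proc :: "('b, 'v) proc \<Rightarrow> bool" where
  "wf_proc PNil"
| "finite (dom G) \<Longrightarrow> (\<forall>T \<in> ran G. wf_sess T) \<Longrightarrow> wf_proc P \<Longrightarrow> wf_proc (Res s G P)"
| "wf_proc P \<Longrightarrow> wf_proc Q \<Longrightarrow> wf_proc (Par P Q)"
| "wf_proc P \<Longrightarrow> wf_proc (Send c q m d P)"
| "bs \<noteq> [] \<Longrightarrow> distinct (map fst bs) \<Longrightarrow> (\<forall>(m, y, P) \<in> set bs. wf_proc P) \<Longrightarrow>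
   wf_proc (Recv c q bs)"
| "distinct (map fst xs) \<Longrightarrow> (\<forall>(x, S) \<in> set xs. wf_sort S) \<Longrightarrow> wf_proc P \<Longrightarrow> wf_proc Q \<Longrightarrow>
   wf_proc (Def X xs P Q)"
| "wf_proc (Call X ds)"
| "wf_proc Err"
| "wf_proc (Crashed s p)"

definition wf_ctx :: "'b ctx \<Rightarrow> bool" where
  "wf_ctx \<Gamma> \<longleftrightarrow> finite (dom \<Gamma>) \<and>
     (\<forall>x S. \<Gamma> (CVar x) = Some S \<longrightarrow> wf_sort S) \<and>
     (\<forall>s p U. \<Gamma> (CEp s p) = Some U \<longrightarrow> wf_U U)"

definition wf_pctx :: "'b pctx \<Rightarrow> bool" where
  "wf_pctx \<Theta> \<longleftrightarrow> (\<forall>X Ss. \<Theta> X = Some Ss \<longrightarrow> (\<forall>S \<in> set Ss. wf_sort S))"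

definition ctx_sub :: "('b \<Rightarrow> 'b \<Rightarrow> bool) \<Rightarrow> 'b ctx \<Rightarrow> 'b ctx \<Rightarrow> bool" where
  "ctx_sub bsub \<Gamma>' \<Gamma> \<longleftrightarrow> dom \<Gamma>' = dom \<Gamma> \<and>
     (\<forall>c S' S. \<Gamma>' c = Some S' \<longrightarrow> \<Gamma> c = Some S \<longrightarrow> subty bsub S' S)"

definition disj :: "'b ctx \<Rightarrow> 'b ctx \<Rightarrow> bool" where
  "disj G1 G2 \<longleftrightarrow> dom G1 \<inter> dom G2 = {}"

definition end_ctx :: "('b \<Rightarrow> 'b \<Rightarrow> bool) \<Rightarrow> 'b ctx \<Rightarrow> bool" where
  "end_ctx bsub \<Gamma> \<longleftrightarrow> (\<forall>c S. \<Gamma> c = Some S \<longrightarrow> (\<exists>B. S = TBase B) \<or> subty bsub S TEnd)"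

definition dtyp :: "('b \<Rightarrow> 'b \<Rightarrow> bool) \<Rightarrow> ('v \<Rightarrow> 'b \<Rightarrow> bool) \<Rightarrow> 'b ctx \<Rightarrow> 'v data \<Rightarrow> 'b ty \<Rightarrow> bool" where
  "dtyp bsub valty G d S \<longleftrightarrow>
     (case d of
        DVal v \<Rightarrow> G = Map.empty \<and> (\<exists>B. S = TBase B \<and> valty v B)
      | DCh c \<Rightarrow> (\<exists>S0. G = [c \<mapsto> S0] \<and> subty bsub S0 S))"

definition sctx :: "sess \<Rightarrow> (role \<Rightarrow> 'b ty option) \<Rightarrow> 'b ctx" where
  "sctx s G = (\<lambda>c. case c of CEp s' p \<Rightarrow> (if s' = s then G p else None) | CVar x \<Rightarrow> None)"

definition pairwise_disj :: "'b ctx list \<Rightarrow> bool" where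
  "pairwise_disj Gs \<longleftrightarrow> (\<forall>i j. i < length Gs \<longrightarrow> j < length Gs \<longrightarrow> i \<noteq> j \<longrightarrow> disj (Gs ! i) (Gs ! j))"

inductive typed :: "('b \<Rightarrow> 'b \<Rightarrow> bool) \<Rightarrow> ('v \<Rightarrow> 'b \<Rightarrow> bool) \<Rightarrow> (sess \<Rightarrow> 'b ctx \<Rightarrow> bool)
                  \<Rightarrow> 'b pctx \<Rightarrow> 'b ctx \<Rightarrow> ('b, 'v) proc \<Rightarrow> bool"
  for bsub :: "'b \<Rightarrow> 'b \<Rightarrow> bool" and valty :: "'v \<Rightarrow> 'b \<Rightarrow> bool"
  and safe :: "sess \<Rightarrow> 'b ctx \<Rightarrow> bool" where
  t_nil: "end_ctx bsub \<Gamma> \<Longrightarrow> typed bsub valty safe \<Theta> \<Gamma> PNil"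
| t_crashed: "end_ctx bsub \<Gamma> \<Longrightarrow> CEp s p \<notin> dom \<Gamma> \<Longrightarrow>
     typed bsub valty safe \<Theta> (\<Gamma>(CEp s p \<mapsto> TStop)) (Crashed s p)"
| t_par: "typed bsub valty safe \<Theta> G1 P1 \<Longrightarrow> typed bsub valty safe \<Theta> G2 P2 \<Longrightarrow> disj G1 G2 \<Longrightarrow>
     typed bsub valty safe \<Theta> (G1 ++ G2) (Par P1 P2)"
| t_send: "subty bsub S1 (TInt q [(m, S, T)]) \<Longrightarrow> wf_sess (TInt q [(m, S, T)]) \<Longrightarrow>
     dtyp bsub valty G2 d S \<Longrightarrow> \<not> subty bsub S TEnd \<Longrightarrow>
     disj \<Gamma> [c \<mapsto> S1] \<Longrightarrow> disj \<Gamma> G2 \<Longrightarrow> disj [c \<mapsto> S1] G2 \<Longrightarrow>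
     typed bsub valty safe \<Theta> (\<Gamma>(c \<mapsto> T)) P \<Longrightarrow>
     typed bsub valty safe \<Theta> (\<Gamma> ++ [c \<mapsto> S1] ++ G2) (Send c q m d P)"
| t_recv: "subty bsub S1 (TExt q ts) \<Longrightarrow> wf_sess (TExt q ts) \<Longrightarrow>
     fst ` set ts = fst ` set bs \<Longrightarrow> c \<notin> dom \<Gamma> \<Longrightarrow>
     (\<forall>(m, y, P) \<in> set bs. \<forall>S T. (m, S, T) \<in> set ts \<longrightarrow>
         CVar y \<notin> dom \<Gamma> \<and> CVar y \<noteq> c \<and>
         typed bsub valty safe \<Theta> (\<Gamma>(CVar y \<mapsto> S, c \<mapsto> T)) P) \<Longrightarrow>
     typed bsub valty safe \<Theta> (\<Gamma> ++ [c \<mapsto> S1]) (Recv c q bs)"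
| t_def: "X \<notin> dom \<Theta> \<Longrightarrow>
     typed bsub valty safe (\<Theta>(X \<mapsto> map snd xs)) (map_of (map (\<lambda>(x, S). (CVar x, S)) xs)) P \<Longrightarrow>
     typed bsub valty safe (\<Theta>(X \<mapsto> map snd xs)) \<Gamma> Q \<Longrightarrow>
     typed bsub valty safe \<Theta> \<Gamma> (Def X xs P Q)"
| t_call: "\<Theta> X = Some Ss \<Longrightarrow> length ds = length Ss \<Longrightarrow> length Gs = length Ss \<Longrightarrow>
     end_ctx bsub G0 \<Longrightarrow>
     (\<forall>i < length Ss. dtyp bsub valty (Gs ! i) (ds ! i) (Ss ! i) \<and> \<not> subty bsub (Ss ! i) TEnd) \<Longrightarrow>
     pairwise_disj (G0 # Gs) \<Longrightarrow>
     typed bsub valty safe \<Theta> (foldl (++) G0 Gs) (Call X ds)"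
| t_res: "safe s (sctx s G) \<Longrightarrow> (\<forall>p. CEp s p \<notin> dom \<Gamma>) \<Longrightarrow>
     typed bsub valty safe \<Theta> (\<Gamma> ++ sctx s G) P \<Longrightarrow>
     typed bsub valty safe \<Theta> \<Gamma> (Res s G P)"

end

theory Submission
  imports Defs
begin


lemma ty_induct2[case_names TBase TExt TInt TMu TV TEnd TStop]:
  assumes "\<And>b. P (TBase b)"
    and "\<And>p ts. (\<And>m S T. (m, S, T) \<in> set ts \<Longrightarrow> P S \<and> P T) \<Longrightarrow> P (TExt p ts)"
    and "\<And>p ts. (\<And>m S T. (m, S, T) \<in> set ts \<Longrightarrow> P S \<and> P T) \<Longrightarrow> P (TInt p ts)"
    and "\<And>t T. P T \<Longrightarrow> P (TMu t T)"
    and "\<And>t. P (TV t)" and "P TEnd" and "P TStop"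
  shows "P x"
proof (induction x rule: ty.induct)
  case (TExt p ts) show ?case
    proof (rule assms(2))
    fix m S T assume "(m, S, T) \<in> set ts"
    then show "P S \<and> P T" using TExt[of "(m,S,T)" "(S,T)"] by (simp add: prod_set_simps)
  qed
next
  case (TInt p ts) show ?case
    proof (rule assms(3))
    fix m S T assume "(m, S, T) \<in> set ts"
    then show "P S \<and> P T" using TInt[of "(m,S,T)" "(S,T)"] by (simp add: prod_set_simps)
  qed
qed (use assms in auto)

definition good :: "'b ty \<Rightarrow> bool" where
  "good A \<longleftrightarrow> (is_sort A \<or> A = TStop) \<and> closed_ty A"

lemma free_subst:
  "free_in x (subst t U T) \<Longrightarrow> (free_in x T \<and> x \<noteq> t) \<or> free_in x U"
proof (induction T rule: ty_induct2)
  case (TExt p ts)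
  from TExt.prems obtain m S T where mem: "(m, S, T) \<in> set (map (map_prod id (map_prod (subst t U) (subst t U))) ts)"
     and fr: "free_in x S \<or> free_in x T"
    by (auto elim: free_in.cases)
  then obtain S0 T0 where "(m, S0, T0) \<in> set ts" "S = subst t U S0" "T = subst t U T0" by auto
  then show ?case using TExt.IH fr by (meson free_in.intros)
next
  case (TInt p ts)
  from TInt.prems obtain m S T where mem: "(m, S, T) \<in> set (map (map_prod id (map_prod (subst t U) (subst t U))) ts)"
     and fr: "free_in x S \<or> free_in x T"
    by (auto elim: free_in.cases)
  then obtain S0 T0 where "(m, S0, T0) \<in> set ts" "S = subst t U S0" "T = subst t U T0" by auto
  then show ?case using TInt.IH fr by (meson free_in.intros)
next
  case (TMu t' T)
  then show ?case
    by (auto split: if_splits elim: free_in.cases intro: free_in.intros)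
qed (auto split: if_splits elim: free_in.cases intro: free_in.intros)

lemma unguarded_free: "unguarded x T \<Longrightarrow> free_in x T"
  by (induction rule: unguarded.induct) (auto intro: free_in.intros)

lemma unguarded_subst:
  "unguarded x (subst t U T) \<Longrightarrow> unguarded x T \<or> unguarded x U"
proof (induction T rule: ty_induct2)
  case (TMu t' T)
  then show ?case
    by (auto split: if_splits elim: unguarded.cases intro: unguarded.intros)
qed (auto split: if_splits elim: unguarded.cases intro: unguarded.intros)

lemma closed_unfold: "closed_ty (TMu t T) \<Longrightarrow> closed_ty (subst t (TMu t T) T)"
  unfolding closed_ty_def
  by (metis free_in.intros(2) free_subst)

lemma sort_sess_subst:
  "(is_sort X \<longrightarrow> is_sess U \<longrightarrow> closed_ty U \<longrightarrow> is_sort (subst t U X)) \<and>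
   (is_sess Y \<longrightarrow> is_sess U \<longrightarrow> closed_ty U \<longrightarrow> is_sess (subst t U Y))"
proof (induction rule: is_sort_is_sess.induct)
  case (1 b) then show ?case by (auto intro: is_sort_is_sess.intros)
next
  case (2 T) then show ?case by (auto intro: is_sort_is_sess.intros)
next
  case 3 then show ?case by (auto intro: is_sort_is_sess.intros)
next
  case (4 t') then show ?case by (auto intro: is_sort_is_sess.intros)
next
  case (5 T t')
  show ?case
  proof (intro impI)
    assume u: "is_sess U" "closed_ty U"
    show "is_sess (subst t U (TMu t' T))"
    proof (cases "t = t'")
      case True then show ?thesis using 5 by (auto intro: is_sort_is_sess.intros)
    next
      case False
      have "\<not> unguarded t' (subst t U T)"
        using unguarded_subst[of t' t U T] \<open>\<not> unguarded t' T\<close> u(2) unguarded_free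
        unfolding closed_ty_def by blast
      then show ?thesis using 5 u False by (auto intro: is_sort_is_sess.intros)
    qed
  qed
next
  case (6 ts p)
  then show ?case
    by (auto intro!: is_sort_is_sess.intros(6) simp: comp_def case_prod_beta; force)
next
  case (7 ts p)
  then show ?case
    by (auto intro!: is_sort_is_sess.intros(7) simp: comp_def case_prod_beta image_image; force)
qed


fun mudepth :: "'b ty \<Rightarrow> nat" where
  "mudepth (TMu t T) = Suc (mudepth T)"
| "mudepth _ = 0"

lemma mudepth_subst: "\<not> unguarded t T \<Longrightarrow> mudepth (subst t U T) = mudepth T"
proof (induction T rule: ty_induct2)
  case (TMu t' T) then show ?case by (auto intro: unguarded.intros)
next
  case (TV t') then show ?case by (auto intro: unguarded.intros)
qed auto

inductive unf :: "'b ty \<Rightarrow> nat \<Rightarrow> 'b ty \<Rightarrow> bool" where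
  unf0: "(\<forall>t T. A \<noteq> TMu t T) \<Longrightarrow> unf A 0 A"
| unfS: "unf (subst t (TMu t T) T) n N \<Longrightarrow> unf (TMu t T) (Suc n) N"

lemma unf_nonmu: "unf A n N \<Longrightarrow> \<forall>t T. N \<noteq> TMu t T"
  by (induction rule: unf.induct) auto

lemma unf_mu_inv: "unf (TMu t T) n N \<Longrightarrow> \<exists>n'. n = Suc n' \<and> unf (subst t (TMu t T) T) n' N"
  by (auto elim: unf.cases)

lemma unf_nonmu_inv: "unf A n N \<Longrightarrow> \<forall>t T. A \<noteq> TMu t T \<Longrightarrow> n = 0 \<and> N = A"
  by (auto elim: unf.cases)

lemma good_mu: "good (TMu t T) \<Longrightarrow> is_sess (TMu t T) \<and> is_sess T \<and> \<not> unguarded t T \<and> closed_ty (TMu t T)"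
  unfolding good_def
  by (auto elim: is_sort.cases is_sess.cases)

lemma good_unfold: "good (TMu t T) \<Longrightarrow> good (subst t (TMu t T) T) \<and> is_sess (subst t (TMu t T) T)"
proof -
  assume g: "good (TMu t T)"
  then have a: "is_sess (TMu t T)" "is_sess T" "closed_ty (TMu t T)" using good_mu by blast+
  then have "is_sess (subst t (TMu t T) T)" using sort_sess_subst by blast
  moreover have "closed_ty (subst t (TMu t T) T)" using closed_unfold a by blast
  ultimately show ?thesis unfolding good_def by (auto intro: is_sort_is_sess.intros)
qed

lemma unf_exists: "good A \<Longrightarrow> \<exists>n N. unf A n N \<and> good N \<and> (is_sess A \<longrightarrow> is_sess N)"
proof (induction "mudepth A" arbitrary: A rule: less_induct)
  case less
  show ?case
  proof (cases "\<exists>t T. A = TMu t T")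
    case True
    then obtain t T where A: "A = TMu t T" by blast
    have g: "good (subst t A T)" "is_sess (subst t A T)" using good_unfold less.prems A by blast+
    have "\<not> unguarded t T" using good_mu less.prems A by blast
    then have "mudepth (subst t A T) < mudepth A" using mudepth_subst[of t T A] A by simp
    then obtain n N where "unf (subst t A T) n N" "good N" "is_sess (subst t A T) \<longrightarrow> is_sess N"
      using less.hyps g by blast
    then show ?thesis using A g unfS by blast
  next
    case False
    then show ?thesis using less.prems unf0 by blast
  qed
qed

lemma subty_nf:
  "subty bsub A B \<Longrightarrow> unf A n NA \<Longrightarrow> unf B m NB \<Longrightarrow> subty bsub NA NB"
proof (induction "n + m" arbitrary: A B n m rule: less_induct)
  case less
  show ?case
  proof (cases "\<exists>t T. A = TMu t T")
    case True
    then obtain t T where A: "A = TMu t T" by blast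
    obtain n' where n': "n = Suc n'" "unf (subst t A T) n' NA" using unf_mu_inv less.prems(2) A by blast
    from less.prems(1)[unfolded A] show ?thesis
    proof (cases rule: subty.cases)
      case muL
      then show ?thesis using less.hyps[of n' m "subst t A T" B] n' less.prems A by auto
    next
      case (muR t2 T2)
      obtain m' where m': "m = Suc m'" "unf (subst t2 (TMu t2 T2) T2) m' NB"
        using unf_mu_inv less.prems(3) muR by blast
      then show ?thesis using less.hyps[of n m' A "subst t2 (TMu t2 T2) T2"] less.prems A muR by auto
    qed
  next
    case False
    then have nA: "n = 0" "NA = A" using unf_nonmu_inv less.prems(2) by blast+
    show ?thesis
    proof (cases "\<exists>t T. B = TMu t T")
      case True
      then obtain t2 T2 where B: "B = TMu t2 T2" by blast
      obtain m' where m': "m = Suc m'" "unf (subst t2 B T2) m' NB"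
        using unf_mu_inv less.prems(3) B by blast
      from less.prems(1)[unfolded B] have "subty bsub A (subst t2 B T2)"
        using False B by (cases rule: subty.cases) auto
      then show ?thesis using less.hyps[of n m' A "subst t2 B T2"] m' nA less.prems by auto
    next
      case False
      then have "m = 0" "NB = B" using unf_nonmu_inv less.prems(3) by blast+
      then show ?thesis using nA less.prems by simp
    qed
  qed
qed

lemma subty_liftR: "unf B m NB \<Longrightarrow> subty bsub X NB \<Longrightarrow> subty bsub X B"
  by (induction rule: unf.induct) (auto intro: subty.muR)

lemma subty_liftL: "unf A n NA \<Longrightarrow> subty bsub NA Y \<Longrightarrow> subty bsub A Y"
  by (induction rule: unf.induct) (auto intro: subty.muL)

lemma sort_sess_int: "is_sort (TInt p xs) \<Longrightarrow> is_sess (TInt p xs)"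
  by (auto elim: is_sort.cases)
lemma sort_sess_ext: "is_sort (TExt p xs) \<Longrightarrow> is_sess (TExt p xs)"
  by (auto elim: is_sort.cases)
lemma sess_int_comp: "is_sess (TInt p xs) \<Longrightarrow> (m, S, T) \<in> set xs \<Longrightarrow> is_sort S \<and> is_sess T"
  by (auto elim: is_sess.cases)
lemma sess_ext_comp: "is_sess (TExt p xs) \<Longrightarrow> (m, S, T) \<in> set xs \<Longrightarrow> is_sort S \<and> is_sess T"
  by (auto elim: is_sess.cases)

lemma good_comp_int: assumes "good (TInt p xs)" "(m, S, T) \<in> set xs" shows "good S \<and> good T"
proof -
  have "is_sess (TInt p xs)" using assms sort_sess_int unfolding good_def by auto
  then have "is_sort S" "is_sess T" using sess_int_comp assms(2) by blast+
  moreover have "closed_ty S" "closed_ty T" using assms unfolding good_def closed_ty_def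
    by (meson free_in.intros)+
  ultimately show ?thesis unfolding good_def by (auto intro: is_sort_is_sess.intros(2))
qed

lemma good_comp_ext: assumes "good (TExt p xs)" "(m, S, T) \<in> set xs" shows "good S \<and> good T"
proof -
  have "is_sess (TExt p xs)" using assms sort_sess_ext unfolding good_def by auto
  then have "is_sort S" "is_sess T" using sess_ext_comp assms(2) by blast+
  moreover have "closed_ty S" "closed_ty T" using assms unfolding good_def closed_ty_def
    by (meson free_in.intros)+
  ultimately show ?thesis unfolding good_def by (auto intro: is_sort_is_sess.intros(2))
qed

lemma good_ext_distinct: "good (TExt p xs) \<Longrightarrow> distinct (map fst xs)"
  unfolding good_def by (auto elim: is_sort.cases is_sess.cases)

lemma good_TV: "\<not> good (TV t)"
  unfolding good_def closed_ty_def by (auto intro: free_in.intros)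


lemma subty_refl_gen:
  assumes r: "reflp bsub"
  shows "good A \<and> good B \<and> (\<exists>n m N. unf A n N \<and> unf B m N) \<Longrightarrow> subty bsub A B"
proof (coinduction arbitrary: A B rule: subty.coinduct)
  case (subty A B)
  then obtain n m N where g: "good A" "good B" and u: "unf A n N" "unf B m N" by blast
  show ?case
  proof (cases "\<exists>t T. A = TMu t T")
    case True
    then obtain t T where A: "A = TMu t T" by blast
    obtain n' where "unf (subst t A T) n' N" using unf_mu_inv u A by blast
    moreover have "good (subst t A T)" using good_unfold g A by blast
    ultimately have D: "good (subst t A T) \<and> good B \<and> (\<exists>n m N. unf (subst t A T) n N \<and> unf B m N)"
      using g u by blast
    show ?thesis
      apply (rule disjI2, rule disjI2, rule disjI2, rule disjI2, rule disjI2, rule disjI1)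
      apply (rule exI[of _ t], rule exI[of _ T], rule exI[of _ B])
      apply (rule conjI, rule A, rule conjI, rule refl, rule disjI1)
      apply (rule exI, rule exI, rule conjI[OF refl], rule conjI[OF refl])
      using D by (simp only: A)
  next
    case nA: False
    show ?thesis
    proof (cases "\<exists>t T. B = TMu t T")
      case True
      then obtain t T where B: "B = TMu t T" by blast
      obtain m' where "unf (subst t B T) m' N" using unf_mu_inv u B by blast
      moreover have "good (subst t B T)" using good_unfold g B by blast
      ultimately have D: "good A \<and> good (subst t B T) \<and> (\<exists>n m N. unf A n N \<and> unf (subst t B T) m N)"
        using g u by blast
      show ?thesis
        apply (rule disjI2, rule disjI2, rule disjI2, rule disjI2, rule disjI2, rule disjI2)
        apply (rule exI[of _ A], rule exI[of _ t], rule exI[of _ T])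
        apply (rule conjI, rule refl, rule conjI, rule B, rule disjI1)
        apply (rule exI, rule exI, rule conjI[OF refl], rule conjI[OF refl])
        using D by (simp only: B)
    next
      case False
      then have "\<forall>t T. B \<noteq> TMu t T" by blast
      then have "N = B" using u(2) unf_nonmu_inv by blast
      moreover have "\<forall>t T. A \<noteq> TMu t T" using nA by blast
      with u(1) unf_nonmu_inv have "N = A" by blast
      ultimately have AB: "B = A" by simp
      have comp: "good S \<and> (\<exists>n m N. unf S n N \<and> unf S m N)" if "good S" for S
        using unf_exists that by blast
      show ?thesis
      proof (cases A)
        case (TBase b) then show ?thesis using AB r by (simp add: reflp_def)
      next
        case (TExt p xs)
        have "\<forall>(m, S, T)\<in>set xs. \<exists>S' T'. (m, S', T') \<in> set xs \<and>
               ((good S \<and> good S' \<and> (\<exists>n m N. unf S n N \<and> unf S' m N)) \<or> subty bsub S S') \<and>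
               ((good T \<and> good T' \<and> (\<exists>n m N. unf T n N \<and> unf T' m N)) \<or> subty bsub T T')"
        proof (intro ballI, clarify)
          fix m S T assume mem: "(m, S, T) \<in> set xs"
          then have "good S" "good T" using good_comp_ext g(1)[unfolded TExt] by blast+
          then show "\<exists>S' T'. (m, S', T') \<in> set xs \<and>
               ((good S \<and> good S' \<and> (\<exists>n m N. unf S n N \<and> unf S' m N)) \<or> subty bsub S S') \<and>
               ((good T \<and> good T' \<and> (\<exists>n m N. unf T n N \<and> unf T' m N)) \<or> subty bsub T T')"
            using comp[of S] comp[of T] mem by blast
        qed
        then show ?thesis using TExt AB by simp
      next
        case (TInt p xs)
        have "\<forall>(m, S', T')\<in>set xs. \<exists>S T. (m, S, T) \<in> set xs \<and>
               ((good S' \<and> good S \<and> (\<exists>n m N. unf S' n N \<and> unf S m N)) \<or> subty bsub S' S) \<and>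
               ((good T \<and> good T' \<and> (\<exists>n m N. unf T n N \<and> unf T' m N)) \<or> subty bsub T T')"
        proof (intro ballI, clarify)
          fix m S T assume mem: "(m, S, T) \<in> set xs"
          then have "good S" "good T" using good_comp_int g(1)[unfolded TInt] by blast+
          then show "\<exists>S' T'. (m, S', T') \<in> set xs \<and>
               ((good S \<and> good S' \<and> (\<exists>n m N. unf S n N \<and> unf S' m N)) \<or> subty bsub S S') \<and>
               ((good T' \<and> good T \<and> (\<exists>n m N. unf T' n N \<and> unf T m N)) \<or> subty bsub T' T)"
            using comp[of S] comp[of T] mem by blast
        qed
        then show ?thesis using TInt AB by simp
      next
        case (TV t) with good_TV g have False by blast
        then show ?thesis by (rule FalseE)
      next
        case TEnd then show ?thesis using AB by simp
      next
        case TStop then show ?thesis using AB by simp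
      next
        case (TMu t T) with nA have False by blast
        then show ?thesis by (rule FalseE)
      qed
    qed
  qed
qed

lemma subty_refl:
  assumes r: "reflp bsub" and g: "good A" shows "subty bsub A A"
  using subty_refl_gen[OF r, of A A] unf_exists[OF g] g by blast



lemma inv_base: "subty bsub (TBase b) C \<Longrightarrow> \<forall>t T. C \<noteq> TMu t T \<Longrightarrow> \<exists>b'. C = TBase b' \<and> bsub b b'"
  by (erule subty.cases) auto
lemma inv_end: "subty bsub TEnd C \<Longrightarrow> \<forall>t T. C \<noteq> TMu t T \<Longrightarrow> C = TEnd"
  by (erule subty.cases) auto
lemma inv_stop: "subty bsub TStop C \<Longrightarrow> \<forall>t T. C \<noteq> TMu t T \<Longrightarrow> C = TStop"
  by (erule subty.cases) auto
lemma inv_int: "subty bsub (TInt p ys) C \<Longrightarrow> \<forall>t T. C \<noteq> TMu t T \<Longrightarrow>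
   \<exists>zs. C = TInt p zs \<and> (\<forall>(m, S'', T'')\<in>set zs. \<exists>S' T'. (m, S', T') \<in> set ys \<and> subty bsub S'' S' \<and> subty bsub T' T'')"
  by (erule subty.cases) auto
lemma inv_ext: "subty bsub (TExt p ys) C \<Longrightarrow> \<forall>t T. C \<noteq> TMu t T \<Longrightarrow>
   \<exists>zs. C = TExt p zs \<and> (\<forall>(m, S, T)\<in>set ys. \<exists>S' T'. (m, S', T') \<in> set zs \<and> subty bsub S S' \<and> subty bsub T T')
     \<and> (length ys = 1 \<and> fst (hd ys) = crash \<longrightarrow> fst ` set zs \<subseteq> fst ` set ys)"
  by (erule subty.cases) auto

lemma subty_trans_gen:
  assumes tr: "transp bsub"
  shows "(\<exists>B. good A \<and> good B \<and> good C \<and> subty bsub A B \<and> subty bsub B C) \<Longrightarrow> subty bsub A C"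
proof (coinduction arbitrary: A C rule: subty.coinduct)
  case (subty A C)
  then obtain B where g: "good A" "good B" "good C" and s1: "subty bsub A B" and s2: "subty bsub B C"
    by blast
  show ?case
  proof (cases "\<exists>t T. A = TMu t T")
    case True
    then obtain t T where A: "A = TMu t T" by blast
    obtain n NA where uA: "unf A n NA" using unf_exists g(1) by blast
    then obtain n' where uA': "unf (subst t A T) n' NA" using unf_mu_inv A by blast
    obtain m NB where uB: "unf B m NB" using unf_exists g(2) by blast
    have "subty bsub NA NB" using subty_nf s1 uA uB by blast
    then have s1': "subty bsub (subst t A T) B" using subty_liftL[OF uA' subty_liftR[OF uB]] by blast
    have "good (subst t A T)" using good_unfold g(1) A by blast
    then have D: "\<exists>B. good (subst t A T) \<and> good B \<and> good C \<and> subty bsub (subst t A T) B \<and> subty bsub B C"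
      using g s1' s2 by blast
    show ?thesis
      apply (rule disjI2, rule disjI2, rule disjI2, rule disjI2, rule disjI2, rule disjI1)
      apply (rule exI[of _ t], rule exI[of _ T], rule exI[of _ C])
      apply (rule conjI, rule A, rule conjI, rule refl, rule disjI1)
      apply (rule exI, rule exI, rule conjI[OF refl], rule conjI[OF refl])
      using D by (simp only: A)
  next
    case nA: False
    show ?thesis
    proof (cases "\<exists>t T. C = TMu t T")
      case True
      then obtain t T where C: "C = TMu t T" by blast
      obtain k NC where uC: "unf C k NC" using unf_exists g(3) by blast
      then obtain k' where uC': "unf (subst t C T) k' NC" using unf_mu_inv C by blast
      obtain m NB where uB: "unf B m NB" using unf_exists g(2) by blast
      have "subty bsub NB NC" using subty_nf s2 uB uC by blast
      then have s2': "subty bsub B (subst t C T)" using subty_liftL[OF uB subty_liftR[OF uC']] by blast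
      have "good (subst t C T)" using good_unfold g(3) C by blast
      then have D: "\<exists>B. good A \<and> good B \<and> good (subst t C T) \<and> subty bsub A B \<and> subty bsub B (subst t C T)"
        using g s1 s2' by blast
      show ?thesis
        apply (rule disjI2, rule disjI2, rule disjI2, rule disjI2, rule disjI2, rule disjI2)
        apply (rule exI[of _ A], rule exI[of _ t], rule exI[of _ T])
        apply (rule conjI, rule refl, rule conjI, rule C, rule disjI1)
        apply (rule exI, rule exI, rule conjI[OF refl], rule conjI[OF refl])
        using D by (simp only: C)
    next
      case nC: False
      obtain m NB where uB: "unf B m NB" and gNB: "good NB" using unf_exists g(2) by blast
      have nA': "\<forall>t T. A \<noteq> TMu t T" using nA by blast
      have nC': "\<forall>t T. C \<noteq> TMu t T" using nC by blast
      have uA: "unf A 0 A" using nA' by (rule unf0)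
      have uC: "unf C 0 C" using nC' by (rule unf0)
      have s1n: "subty bsub A NB" using subty_nf[OF s1 uA uB] .
      have s2n: "subty bsub NB C" using subty_nf[OF s2 uB uC] .
      have nNB: "\<forall>t T. NB \<noteq> TMu t T" using unf_nonmu uB by blast
      from s1n show ?thesis
      proof (cases rule: subty.cases)
        case (base b1 b2)
        obtain b3 where C: "C = TBase b3" "bsub b2 b3" using inv_base[OF s2n[unfolded base(2)]] nC' by blast
        have "bsub b1 b3" using tr base(3) C(2) by (meson transpD)
        then show ?thesis apply (rule_tac disjI1) using base C by blast
      next
        case "end"
        have C: "C = TEnd" using inv_end[OF s2n[unfolded \<open>NB = TEnd\<close>]] nC' by blast
        show ?thesis by (rule disjI2, rule disjI1) (use C \<open>A = TEnd\<close> in simp)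
      next
        case stop
        have C: "C = TStop" using inv_stop[OF s2n[unfolded stop(2)]] nC' by blast
        show ?thesis by (rule disjI2, rule disjI2, rule disjI1) (use C stop in simp)
      next
        case (int ys xs p)
        obtain zs where C: "C = TInt p zs" and H2: "\<forall>(m, S'', T'')\<in>set zs. \<exists>S' T'. (m, S', T') \<in> set ys \<and> subty bsub S'' S' \<and> subty bsub T' T''"
          using inv_int[OF s2n[unfolded int(2)]] nC' by blast
        have key: "\<forall>(m, S', T')\<in>set zs.
            \<exists>S T. (m, S, T) \<in> set xs \<and>
                  ((\<exists>A C. S' = A \<and> S = C \<and> (\<exists>B. good A \<and> good B \<and> good C \<and> subty bsub A B \<and> subty bsub B C)) \<or> subty bsub S' S) \<and>
                  ((\<exists>A C. T = A \<and> T' = C \<and> (\<exists>B. good A \<and> good B \<and> good C \<and> subty bsub A B \<and> subty bsub B C)) \<or> subty bsub T T')"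
        proof (intro ballI, clarify)
          fix m S'' T'' assume mz: "(m, S'', T'') \<in> set zs"
          then obtain S' T' where my: "(m, S', T') \<in> set ys" and a1: "subty bsub S'' S'" "subty bsub T' T''"
            using H2 by blast
          then obtain S T where mx: "(m, S, T) \<in> set xs" and a2: "subty bsub S' S" "subty bsub T T'"
            using int(3) by blast
          have gs: "good S''" "good T''" using good_comp_int mz g(3)[unfolded C] by blast+
          have gs2: "good S'" "good T'" using good_comp_int my gNB[unfolded int(2)] by blast+
          have gs3: "good S" "good T" using good_comp_int mx g(1)[unfolded int(1)] by blast+
          show "\<exists>S T. (m, S, T) \<in> set xs \<and>
                  ((\<exists>A C. S'' = A \<and> S = C \<and> (\<exists>B. good A \<and> good B \<and> good C \<and> subty bsub A B \<and> subty bsub B C)) \<or> subty bsub S'' S) \<and>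
                  ((\<exists>A C. T = A \<and> T'' = C \<and> (\<exists>B. good A \<and> good B \<and> good C \<and> subty bsub A B \<and> subty bsub B C)) \<or> subty bsub T T'')"
            apply (rule exI[of _ S], rule exI[of _ T])
            using mx gs gs2 gs3 a1 a2 by blast
        qed
        show ?thesis
          apply (rule disjI2, rule disjI2, rule disjI2, rule disjI1)
          apply (rule exI[of _ zs], rule exI[of _ xs], rule exI[of _ p])
          apply (rule conjI, rule int(1), rule conjI, rule C)
          by (rule key)
      next
        case (ext xs ys p)
        obtain zs where C: "C = TExt p zs" and H2: "\<forall>(m, S, T)\<in>set ys. \<exists>S' T'. (m, S', T') \<in> set zs \<and> subty bsub S S' \<and> subty bsub T T'"
          and cr2: "length ys = 1 \<and> fst (hd ys) = crash \<longrightarrow> fst ` set zs \<subseteq> fst ` set ys"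
          using inv_ext[OF s2n[unfolded ext(2)]] nC' by blast
        have key: "\<forall>(m, S, T)\<in>set xs.
            \<exists>S' T'. (m, S', T') \<in> set zs \<and>
                  ((\<exists>A C. S = A \<and> S' = C \<and> (\<exists>B. good A \<and> good B \<and> good C \<and> subty bsub A B \<and> subty bsub B C)) \<or> subty bsub S S') \<and>
                  ((\<exists>A C. T = A \<and> T' = C \<and> (\<exists>B. good A \<and> good B \<and> good C \<and> subty bsub A B \<and> subty bsub B C)) \<or> subty bsub T T')"
        proof (intro ballI, clarify)
          fix m S T assume mx: "(m, S, T) \<in> set xs"
          then obtain S' T' where my: "(m, S', T') \<in> set ys" and a1: "subty bsub S S'" "subty bsub T T'"
            using ext(3) by blast
          then obtain S'' T'' where mz: "(m, S'', T'') \<in> set zs" and a2: "subty bsub S' S''" "subty bsub T' T''"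
            using H2 by blast
          have gs: "good S''" "good T''" using good_comp_ext mz g(3)[unfolded C] by blast+
          have gs2: "good S'" "good T'" using good_comp_ext my gNB[unfolded ext(2)] by blast+
          have gs3: "good S" "good T" using good_comp_ext mx g(1)[unfolded ext(1)] by blast+
          show "\<exists>S' T'. (m, S', T') \<in> set zs \<and>
                  ((\<exists>A C. S = A \<and> S' = C \<and> (\<exists>B. good A \<and> good B \<and> good C \<and> subty bsub A B \<and> subty bsub B C)) \<or> subty bsub S S') \<and>
                  ((\<exists>A C. T = A \<and> T' = C \<and> (\<exists>B. good A \<and> good B \<and> good C \<and> subty bsub A B \<and> subty bsub B C)) \<or> subty bsub T T')"
            apply (rule exI[of _ S''], rule exI[of _ T''])
            using mz gs gs2 gs3 a1 a2 by blast
        qed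
        have cr: "length xs = 1 \<and> fst (hd xs) = crash \<longrightarrow> fst ` set zs \<subseteq> fst ` set xs"
        proof
          assume h: "length xs = 1 \<and> fst (hd xs) = crash"
          then obtain S T where xs: "xs = [(crash, S, T)]"
            by (cases xs) (auto simp: length_Suc_conv)
          have sub1: "fst ` set ys \<subseteq> {crash}" using ext(4) h xs by simp
          obtain S' T' where "(crash, S', T') \<in> set ys" using ext(3) xs by auto
          then have ysne: "ys \<noteq> []" by auto
          have dys: "distinct (map fst ys)" using good_ext_distinct gNB[unfolded ext(2)] by blast
          have "set (map fst ys) = {crash}" using sub1 ysne by (cases ys) auto
          then have "length ys = 1" using distinct_card[OF dys] by simp
          moreover have "fst (hd ys) = crash" using ysne \<open>set (map fst ys) = {crash}\<close> by (cases ys) auto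
          ultimately have "fst ` set zs \<subseteq> fst ` set ys" using cr2 by blast
          then show "fst ` set zs \<subseteq> fst ` set xs" using sub1 xs by auto
        qed
        show ?thesis
          apply (rule disjI2, rule disjI2, rule disjI2, rule disjI2, rule disjI1)
          apply (rule exI[of _ xs], rule exI[of _ zs], rule exI[of _ p])
          apply (rule conjI, rule ext(1), rule conjI, rule C, rule conjI)
          by (rule key) (rule cr)
      next
        case (muL t T)
        with nA' have False by blast
        then show ?thesis by (rule FalseE)
      next
        case (muR t T)
        with nNB have False by blast
        then show ?thesis by (rule FalseE)
      qed
    qed
  qed
qed

lemma subty_trans:
  assumes "transp bsub" "good A" "good B" "good C" "subty bsub A B" "subty bsub B C"
  shows "subty bsub A C"
  using subty_trans_gen[OF assms(1)] assms(2-) by blast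



definition goodctx :: "'b ctx \<Rightarrow> bool" where
  "goodctx \<Gamma> \<longleftrightarrow> (\<forall>c S. \<Gamma> c = Some S \<longrightarrow> good S)"

lemma wf_sess_good: "wf_sess T \<Longrightarrow> good T"
  unfolding wf_sess_def good_def by (auto intro: is_sort_is_sess.intros)

lemma wf_sort_good: "wf_sort T \<Longrightarrow> good T"
  unfolding wf_sort_def good_def by auto

lemma good_TStop: "good TStop"
  unfolding good_def closed_ty_def by (auto elim: free_in.cases)

lemma wf_U_good: "wf_U T \<Longrightarrow> good T"
  unfolding wf_U_def using wf_sess_good good_TStop by blast

lemma wf_ctx_good: "wf_ctx \<Gamma> \<Longrightarrow> goodctx \<Gamma>"
  unfolding goodctx_def
proof (intro allI impI)
  fix c S assume w: "wf_ctx \<Gamma>" and c: "\<Gamma> c = Some S"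
  show "good S"
  proof (cases c)
    case (CVar x) then show ?thesis using w c wf_sort_good unfolding wf_ctx_def by blast
  next
    case (CEp s p) then show ?thesis using w c wf_U_good unfolding wf_ctx_def by blast
  qed
qed

lemma goodctx_le: "goodctx \<Gamma> \<Longrightarrow> G \<subseteq>\<^sub>m \<Gamma> \<Longrightarrow> goodctx G"
  unfolding goodctx_def map_le_def
proof (intro allI impI)
  fix c S assume a: "\<forall>c S. \<Gamma> c = Some S \<longrightarrow> good S" "\<forall>a\<in>dom G. G a = \<Gamma> a" "G c = Some S"
  then have "\<Gamma> c = Some S" by (metis domI)
  then show "good S" using a(1) by blast
qed

lemma goodctx_restr: "goodctx \<Gamma> \<Longrightarrow> goodctx (\<Gamma> |` X)"
  unfolding goodctx_def by (auto simp: restrict_map_def split: if_splits)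

lemma goodctx_upd: "goodctx \<Gamma> \<Longrightarrow> good S \<Longrightarrow> goodctx (\<Gamma>(c \<mapsto> S))"
  unfolding goodctx_def by auto

lemma goodctx_add: "goodctx \<Gamma> \<Longrightarrow> goodctx D \<Longrightarrow> goodctx (\<Gamma> ++ D)"
  unfolding goodctx_def by (auto simp: map_add_def split: option.splits)

lemma ctx_sub_dom: "ctx_sub bsub \<Gamma>' \<Gamma> \<Longrightarrow> dom \<Gamma>' = dom \<Gamma>"
  unfolding ctx_sub_def by blast

lemma restr_sub:
  assumes s: "ctx_sub bsub \<Gamma>' \<Gamma>" and le: "G \<subseteq>\<^sub>m \<Gamma>"
  shows "ctx_sub bsub (\<Gamma>' |` dom G) G"
proof -
  have d: "dom \<Gamma>' = dom \<Gamma>" using s unfolding ctx_sub_def by blast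
  have dG: "dom G \<subseteq> dom \<Gamma>" using le by (rule map_le_implies_dom_le)
  have "dom (\<Gamma>' |` dom G) = dom G" using d dG by auto
  moreover have "\<forall>c S' S. (\<Gamma>' |` dom G) c = Some S' \<longrightarrow> G c = Some S \<longrightarrow> subty bsub S' S"
  proof (intro allI impI)
    fix c S' S assume a: "(\<Gamma>' |` dom G) c = Some S'" "G c = Some S"
    then have "\<Gamma>' c = Some S'" by (auto simp: restrict_map_def split: if_splits)
    moreover have "\<Gamma> c = Some S" using le a(2) unfolding map_le_def by (metis domI)
    ultimately show "subty bsub S' S" using s unfolding ctx_sub_def by blast
  qed
  ultimately show ?thesis unfolding ctx_sub_def by blast
qed

lemma restr_union: "\<Gamma>' |` X ++ \<Gamma>' |` Y = \<Gamma>' |` (X \<union> Y)"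
  by (auto simp: fun_eq_iff restrict_map_def map_add_def split: option.splits)

lemma restr_dom: "\<Gamma>' |` dom \<Gamma>' = \<Gamma>'"
  by (rule HOL.ext) (simp add: restrict_map_def domIff)

lemma dom_restr: "dom G \<subseteq> dom \<Gamma>' \<Longrightarrow> dom (\<Gamma>' |` dom G) = dom G"
  by auto

lemma ctx_sub_upd: "ctx_sub bsub \<Gamma>' \<Gamma> \<Longrightarrow> subty bsub S' S \<Longrightarrow> ctx_sub bsub (\<Gamma>'(c \<mapsto> S')) (\<Gamma>(c \<mapsto> S))"
  unfolding ctx_sub_def by auto

lemma ctx_sub_add:
  assumes s1: "ctx_sub bsub \<Gamma>' \<Gamma>" and s2: "ctx_sub bsub D' D"
  shows "ctx_sub bsub (\<Gamma>' ++ D') (\<Gamma> ++ D)"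
proof -
  have d1: "dom \<Gamma>' = dom \<Gamma>" and d2: "dom D' = dom D" using s1 s2 unfolding ctx_sub_def by blast+
  have "\<forall>c S' S. (\<Gamma>' ++ D') c = Some S' \<longrightarrow> (\<Gamma> ++ D) c = Some S \<longrightarrow> subty bsub S' S"
  proof (intro allI impI)
    fix c S' S assume a: "(\<Gamma>' ++ D') c = Some S'" "(\<Gamma> ++ D) c = Some S"
    show "subty bsub S' S"
    proof (cases "c \<in> dom D")
      case True
      then have "c \<in> dom D'" using d2 by simp
      then have "D' c = Some S'" "D c = Some S" using a True by (auto simp: map_add_def split: option.splits)
      then show ?thesis using s2 unfolding ctx_sub_def by blast
    next
      case False
      then have "c \<notin> dom D'" using d2 by simp
      then have "\<Gamma>' c = Some S'" "\<Gamma> c = Some S" using a False by (auto simp: map_add_def split: option.splits)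
      then show ?thesis using s1 unfolding ctx_sub_def by blast
    qed
  qed
  moreover have "dom (\<Gamma>' ++ D') = dom (\<Gamma> ++ D)" using d1 d2 by simp
  ultimately show ?thesis unfolding ctx_sub_def by blast
qed

lemma ctx_sub_refl: "reflp bsub \<Longrightarrow> goodctx D \<Longrightarrow> ctx_sub bsub D D"
  unfolding ctx_sub_def goodctx_def using subty_refl by auto

lemma ctx_sub_single: "ctx_sub bsub G' [c \<mapsto> S] \<Longrightarrow> \<exists>S'. G' = [c \<mapsto> S'] \<and> subty bsub S' S"
proof -
  assume a: "ctx_sub bsub G' [c \<mapsto> S]"
  then have d: "dom G' = {c}" unfolding ctx_sub_def by simp
  then obtain S' where "G' c = Some S'" by auto
  moreover have "G' = [c \<mapsto> S']" using d calculation by (auto simp: fun_eq_iff)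
  ultimately show ?thesis using a unfolding ctx_sub_def by auto
qed

lemma ctx_sub_empty: "ctx_sub bsub G' Map.empty \<Longrightarrow> G' = Map.empty"
  unfolding ctx_sub_def by auto

lemma is_sess_TBase: "is_sess (TBase b) \<Longrightarrow> False"
  by (erule is_sess.cases) auto
lemma is_sess_TStop: "is_sess TStop \<Longrightarrow> False"
  by (erule is_sess.cases) auto

lemma invL_base: "subty bsub N (TBase b) \<Longrightarrow> \<forall>t T. N \<noteq> TMu t T \<Longrightarrow> \<exists>b'. N = TBase b'"
  by (erule subty.cases) auto
lemma invL_stop: "subty bsub N TStop \<Longrightarrow> \<forall>t T. N \<noteq> TMu t T \<Longrightarrow> N = TStop"
  by (erule subty.cases) auto

lemma sub_base: "good S' \<Longrightarrow> subty bsub S' (TBase b) \<Longrightarrow> \<exists>b'. S' = TBase b'"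
proof -
  assume g: "good S'" and s: "subty bsub S' (TBase b)"
  obtain n N where u: "unf S' n N" and i: "is_sess S' \<longrightarrow> is_sess N" using unf_exists g by blast
  have "unf (TBase b) 0 (TBase b)" by (rule unf0) simp
  then have s': "subty bsub N (TBase b)" using subty_nf[OF s u] by blast
  have "\<forall>t T. N \<noteq> TMu t T" using unf_nonmu[OF u] .
  then obtain b' where N: "N = TBase b'" using invL_base[OF s'] by blast
  show ?thesis
  proof (cases "\<exists>t T. S' = TMu t T")
    case True
    then have "is_sess S'" using good_mu g by blast
    then have "is_sess N" using i by blast
    then have "is_sess (TBase b')" unfolding N .
    then have False by (rule is_sess_TBase)
    then show ?thesis by (rule FalseE)
  next
    case False
    then have "N = S'" using unf_nonmu_inv u by blast
    then show ?thesis using N by (intro exI[of _ b']) simp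
  qed
qed

lemma sub_stop: "good S' \<Longrightarrow> subty bsub S' TStop \<Longrightarrow> S' = TStop"
proof -
  assume g: "good S'" and s: "subty bsub S' TStop"
  obtain n N where u: "unf S' n N" and i: "is_sess S' \<longrightarrow> is_sess N" using unf_exists g by blast
  have "unf TStop 0 TStop" by (rule unf0) simp
  then have "subty bsub N TStop" using subty_nf s u by blast
  then have N: "N = TStop" using invL_stop unf_nonmu u by blast
  show ?thesis
  proof (cases "\<exists>t T. S' = TMu t T")
    case True
    then have "is_sess S'" using good_mu g by blast
    then have "is_sess N" using i by blast
    then have False unfolding N by (rule is_sess_TStop)
    then show ?thesis by (rule FalseE)
  next
    case False
    then have "N = S'" using unf_nonmu_inv u by blast
    then show ?thesis using N by blast
  qed
qed

lemma good_TEnd: "good TEnd"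
proof -
  have "is_sort TEnd" by (rule is_sort_is_sess.intros(2), rule is_sort_is_sess.intros(3))
  moreover have "closed_ty TEnd" unfolding closed_ty_def by (auto elim: free_in.cases)
  ultimately show ?thesis unfolding good_def by blast
qed

lemma end_sub:
  assumes tr: "transp bsub" and s: "ctx_sub bsub G' G" and e: "end_ctx bsub G"
    and g': "goodctx G'" and g: "goodctx G"
  shows "end_ctx bsub G'"
  unfolding end_ctx_def
proof (intro allI impI)
  fix c S' assume c: "G' c = Some S'"
  then have "c \<in> dom G'" by blast
  then have "c \<in> dom G" using ctx_sub_dom[OF s] by simp
  then obtain S where cS: "G c = Some S" by blast
  have sub: "subty bsub S' S" using s c cS unfolding ctx_sub_def by blast
  have gs: "good S'" "good S" using g g' c cS unfolding goodctx_def by auto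
  from e cS have "(\<exists>B. S = TBase B) \<or> subty bsub S TEnd" unfolding end_ctx_def by blast
  then show "(\<exists>B. S' = TBase B) \<or> subty bsub S' TEnd"
  proof
    assume "\<exists>B. S = TBase B"
    then obtain B where "S = TBase B" by blast
    then have "subty bsub S' (TBase B)" using sub by simp
    then have "\<exists>b'. S' = TBase b'" by (rule sub_base[OF gs(1)])
    then show ?thesis by (rule disjI1)
  next
    assume "subty bsub S TEnd"
    then have "subty bsub S' TEnd" using subty_trans[OF tr gs(1) gs(2) good_TEnd sub] by blast
    then show ?thesis by (rule disjI2)
  qed
qed

lemma dtyp_sub:
  assumes tr: "transp bsub" and d: "dtyp bsub valty G d S" and s: "ctx_sub bsub G' G"
    and g': "goodctx G'" and g: "goodctx G" and gS: "good S"
  shows "dtyp bsub valty G' d S"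
proof (cases d)
  case (DVal v)
  then have G: "G = Map.empty" and B: "\<exists>B. S = TBase B \<and> valty v B" using d unfolding dtyp_def by auto
  have "G' = Map.empty" using s unfolding G by (rule ctx_sub_empty)
  then show ?thesis using DVal B unfolding dtyp_def by simp
next
  case (DCh c)
  then obtain S0 where G: "G = [c \<mapsto> S0]" and s0: "subty bsub S0 S" using d unfolding dtyp_def by auto
  obtain S0' where G': "G' = [c \<mapsto> S0']" and s0': "subty bsub S0' S0" using ctx_sub_single s G by blast
  have "good S0'" "good S0" using g g' G G' unfolding goodctx_def by auto
  then have "subty bsub S0' S" using subty_trans[OF tr _ _ gS s0' s0] by blast
  then show ?thesis using DCh G' unfolding dtyp_def by auto
qed

lemma disj_le_left: "Defs.disj A B \<Longrightarrow> A \<subseteq>\<^sub>m A ++ B"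
  unfolding Defs.disj_def map_le_def by (auto simp: map_add_def split: option.splits)

lemma disj_le_right: "B \<subseteq>\<^sub>m A ++ B"
  by (rule map_le_map_add)



lemma foldl_restr:
  "foldl (++) (\<Gamma>' |` A0) (map (\<lambda>G. \<Gamma>' |` dom G) Gs) = \<Gamma>' |` (A0 \<union> \<Union>(dom ` set Gs))"
  by (induction Gs arbitrary: A0) (simp_all add: restr_union Un_assoc)

lemma dom_foldl: "dom (foldl (++) G0 Gs) = dom G0 \<union> \<Union>(dom ` set Gs)"
  by (induction Gs arbitrary: G0) auto

lemma disj_sym: "Defs.disj A B \<Longrightarrow> Defs.disj B A"
  unfolding Defs.disj_def by blast

lemma pd_cons: "pairwise_disj (G # Gs) \<longleftrightarrow> (\<forall>j<length Gs. Defs.disj G (Gs ! j)) \<and> pairwise_disj Gs"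
proof
  assume a: "pairwise_disj (G # Gs)"
  have "\<forall>j<length Gs. Defs.disj G (Gs ! j)"
  proof (intro allI impI)
    fix j assume "j < length Gs"
    then show "Defs.disj G (Gs ! j)" using a unfolding pairwise_disj_def
      by (metis Suc_less_eq length_Cons nat.distinct(1) nth_Cons_0 nth_Cons_Suc zero_less_Suc)
  qed
  moreover have "pairwise_disj Gs" unfolding pairwise_disj_def
  proof (intro allI impI)
    fix i j assume "i < length Gs" "j < length Gs" "i \<noteq> j"
    then show "Defs.disj (Gs ! i) (Gs ! j)" using a unfolding pairwise_disj_def
      by (metis Suc_less_eq length_Cons nth_Cons_Suc nat.inject)
  qed
  ultimately show "(\<forall>j<length Gs. Defs.disj G (Gs ! j)) \<and> pairwise_disj Gs" by blast
next
  assume a: "(\<forall>j<length Gs. Defs.disj G (Gs ! j)) \<and> pairwise_disj Gs"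
  show "pairwise_disj (G # Gs)" unfolding pairwise_disj_def
  proof (intro allI impI)
    fix i j assume h: "i < length (G # Gs)" "j < length (G # Gs)" "i \<noteq> j"
    show "Defs.disj ((G # Gs) ! i) ((G # Gs) ! j)"
    proof (cases i)
      case 0
      then obtain j' where "j = Suc j'" using h by (cases j) auto
      then show ?thesis using a h 0 by auto
    next
      case (Suc i')
      show ?thesis
      proof (cases j)
        case 0
        then show ?thesis using a h Suc disj_sym by auto
      next
        case (Suc j')
        then show ?thesis using a h \<open>i = Suc i'\<close> unfolding pairwise_disj_def by auto
      qed
    qed
  qed
qed

lemma pd_merge: "pairwise_disj (G0 # G1 # Gs) \<Longrightarrow> pairwise_disj ((G0 ++ G1) # Gs)"
proof -
  assume a: "pairwise_disj (G0 # G1 # Gs)"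
  then have a1: "\<forall>j<length (G1 # Gs). Defs.disj G0 ((G1 # Gs) ! j)" and a2: "pairwise_disj (G1 # Gs)"
    using pd_cons by blast+
  from a2 have b1: "\<forall>j<length Gs. Defs.disj G1 (Gs ! j)" and b2: "pairwise_disj Gs" using pd_cons by blast+
  have "\<forall>j<length Gs. Defs.disj (G0 ++ G1) (Gs ! j)"
  proof (intro allI impI)
    fix j assume j: "j < length Gs"
    then have "Defs.disj G0 (Gs ! j)" using a1 by (metis Suc_less_eq length_Cons nth_Cons_Suc)
    moreover have "Defs.disj G1 (Gs ! j)" using b1 j by blast
    ultimately show "Defs.disj (G0 ++ G1) (Gs ! j)" unfolding Defs.disj_def by auto
  qed
  then show ?thesis using b2 pd_cons by blast
qed

lemma le_foldl: "pairwise_disj (G0 # Gs) \<Longrightarrow> G \<in> set (G0 # Gs) \<Longrightarrow> G \<subseteq>\<^sub>m foldl (++) G0 Gs"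
proof (induction Gs arbitrary: G0 G)
  case Nil then show ?case by simp
next
  case (Cons G1 Gs)
  have pm: "pairwise_disj ((G0 ++ G1) # Gs)" using pd_merge Cons.prems(1) by blast
  have d01: "Defs.disj G0 G1" using Cons.prems(1) pd_cons by fastforce
  have "G0 ++ G1 \<in> set ((G0 ++ G1) # Gs)" by simp
  then have top: "G0 ++ G1 \<subseteq>\<^sub>m foldl (++) (G0 ++ G1) Gs" by (rule Cons.IH[OF pm])
  show ?case
  proof (cases "G \<in> set Gs")
    case True
    then have "G \<in> set ((G0 ++ G1) # Gs)" by simp
    then show ?thesis using Cons.IH[OF pm] by simp
  next
    case False
    then have "G = G0 \<or> G = G1" using Cons.prems(2) by auto
    then show ?thesis
    proof
      assume "G = G0"
      then show ?thesis using map_le_trans[OF disj_le_left[OF d01] top] by simp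
    next
      assume "G = G1"
      then show ?thesis using map_le_trans[OF disj_le_right top] by simp
    qed
  qed
qed

lemma pd_dom: "map dom Gs = map dom Hs \<Longrightarrow> pairwise_disj Gs = pairwise_disj Hs"
proof -
  assume m: "map dom Gs = map dom Hs"
  then have len: "length Gs = length Hs" by (metis length_map)
  have "\<forall>i<length Gs. dom (Gs ! i) = dom (Hs ! i)" using m len by (metis nth_map)
  then show ?thesis using len unfolding pairwise_disj_def Defs.disj_def by auto
qed



inductive_cases wfp_Par: "wf_proc (Par P Q)"
inductive_cases wfp_Send: "wf_proc (Send c q m d P)"
inductive_cases wfp_Recv: "wf_proc (Recv c q bs)"
inductive_cases wfp_Def: "wf_proc (Def X xs P Q)"
inductive_cases wfp_Res: "wf_proc (Res s G P)"

lemma typed_sub: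
  assumes r: "reflp bsub" and tr: "transp bsub"
  shows "typed bsub valty safe \<Theta> \<Gamma> P \<Longrightarrow> \<forall>\<Gamma>'. wf_pctx \<Theta> \<longrightarrow> goodctx \<Gamma> \<longrightarrow> wf_proc P \<longrightarrow>
            ctx_sub bsub \<Gamma>' \<Gamma> \<longrightarrow> goodctx \<Gamma>' \<longrightarrow> typed bsub valty safe \<Theta> \<Gamma>' P"
proof (induction rule: typed.induct)
  case (t_nil \<Gamma> \<Theta>)
  show ?case
  proof (intro allI impI)
    fix \<Gamma>' assume g: "goodctx \<Gamma>" and sb: "ctx_sub bsub \<Gamma>' \<Gamma>" and g': "goodctx \<Gamma>'"
    show "typed bsub valty safe \<Theta> \<Gamma>' PNil"
      using end_sub[OF tr sb t_nil g' g] by (rule typed.t_nil)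
  qed
next
  case (t_crashed \<Gamma> s p \<Theta>)
  show ?case
  proof (intro allI impI)
    fix \<Gamma>' assume g: "goodctx (\<Gamma>(CEp s p \<mapsto> TStop))" and sb: "ctx_sub bsub \<Gamma>' (\<Gamma>(CEp s p \<mapsto> TStop))"
      and g': "goodctx \<Gamma>'"
    have dG': "dom \<Gamma>' = insert (CEp s p) (dom \<Gamma>)" using ctx_sub_dom[OF sb] by simp
    then obtain S' where e': "\<Gamma>' (CEp s p) = Some S'" by blast
    have "subty bsub S' TStop" using sb e' unfolding ctx_sub_def by auto
    moreover have "good S'" using g' e' unfolding goodctx_def by blast
    ultimately have S': "S' = TStop" using sub_stop by blast
    define G0 where "G0 = \<Gamma>' |` dom \<Gamma>"
    have le: "\<Gamma> \<subseteq>\<^sub>m \<Gamma>(CEp s p \<mapsto> TStop)" using t_crashed(2) unfolding map_le_def by auto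
    have sb0: "ctx_sub bsub G0 \<Gamma>" unfolding G0_def by (rule restr_sub[OF sb le])
    have e0: "end_ctx bsub G0"
      using end_sub[OF tr sb0 t_crashed(1) _ goodctx_le[OF g le]] goodctx_restr[OF g'] unfolding G0_def by blast
    have nd: "CEp s p \<notin> dom G0" using ctx_sub_dom[OF sb0] t_crashed(2) by simp
    have eq: "\<Gamma>' = G0(CEp s p \<mapsto> TStop)"
    proof (rule HOL.ext)
      fix x show "\<Gamma>' x = (G0(CEp s p \<mapsto> TStop)) x"
      proof (cases "x = CEp s p")
        case True then show ?thesis using e' S' by simp
      next
        case False
        show ?thesis
        proof (cases "x \<in> dom \<Gamma>")
          case True then show ?thesis using False by (simp add: G0_def)
        next
          case nx: False
          then have "x \<notin> dom \<Gamma>'" using dG' False by simp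
          then show ?thesis using False nx by (simp add: G0_def domIff)
        qed
      qed
    qed
    show "typed bsub valty safe \<Theta> \<Gamma>' (Crashed s p)"
      unfolding eq by (rule typed.t_crashed[OF e0 nd])
  qed
next
  case (t_par \<Theta> G1 P1 G2 P2)
  show ?case
  proof (intro allI impI)
    fix \<Gamma>' assume pc: "wf_pctx \<Theta>" and g: "goodctx (G1 ++ G2)" and w: "wf_proc (Par P1 P2)"
      and sb: "ctx_sub bsub \<Gamma>' (G1 ++ G2)" and g': "goodctx \<Gamma>'"
    have w1: "wf_proc P1" and w2: "wf_proc P2" using w by (auto elim: wfp_Par)
    have le1: "G1 \<subseteq>\<^sub>m G1 ++ G2" using disj_le_left[OF t_par(3)] .
    have le2: "G2 \<subseteq>\<^sub>m G1 ++ G2" by (rule disj_le_right)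
    define H1 where "H1 = \<Gamma>' |` dom G1"
    define H2 where "H2 = \<Gamma>' |` dom G2"
    have sb1: "ctx_sub bsub H1 G1" unfolding H1_def by (rule restr_sub[OF sb le1])
    have sb2: "ctx_sub bsub H2 G2" unfolding H2_def by (rule restr_sub[OF sb le2])
    have ty1: "typed bsub valty safe \<Theta> H1 P1"
      using t_par(4) pc goodctx_le[OF g le1] w1 sb1 goodctx_restr[OF g'] unfolding H1_def by blast
    have ty2: "typed bsub valty safe \<Theta> H2 P2"
      using t_par(5) pc goodctx_le[OF g le2] w2 sb2 goodctx_restr[OF g'] unfolding H2_def by blast
    have dj: "Defs.disj H1 H2" using t_par(3) ctx_sub_dom[OF sb1] ctx_sub_dom[OF sb2]
      unfolding Defs.disj_def by simp
    have eq: "\<Gamma>' = H1 ++ H2"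
      unfolding H1_def H2_def restr_union
      using ctx_sub_dom[OF sb] restr_dom[of \<Gamma>'] by (simp add: Un_commute)
    show "typed bsub valty safe \<Theta> \<Gamma>' (Par P1 P2)"
      unfolding eq by (rule typed.t_par[OF ty1 ty2 dj])
  qed
next
  case (t_send S1 q m S T G2 d \<Gamma> c \<Theta> P)
  show ?case
  proof (intro allI impI)
    fix \<Gamma>' assume pc: "wf_pctx \<Theta>" and g: "goodctx (\<Gamma> ++ [c \<mapsto> S1] ++ G2)" and w: "wf_proc (Send c q m d P)"
      and sb: "ctx_sub bsub \<Gamma>' (\<Gamma> ++ [c \<mapsto> S1] ++ G2)" and g': "goodctx \<Gamma>'"
    have wP: "wf_proc P" using w by (auto elim: wfp_Send)
    have d12: "Defs.disj (\<Gamma> ++ [c \<mapsto> S1]) G2" using t_send(6) t_send(7) unfolding Defs.disj_def by auto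
    have leG2: "G2 \<subseteq>\<^sub>m \<Gamma> ++ [c \<mapsto> S1] ++ G2" by (rule disj_le_right)
    have leA: "\<Gamma> ++ [c \<mapsto> S1] \<subseteq>\<^sub>m \<Gamma> ++ [c \<mapsto> S1] ++ G2" by (rule disj_le_left[OF d12])
    have leC: "[c \<mapsto> S1] \<subseteq>\<^sub>m \<Gamma> ++ [c \<mapsto> S1] ++ G2" by (rule map_le_trans[OF disj_le_right leA])
    have le0: "\<Gamma> \<subseteq>\<^sub>m \<Gamma> ++ [c \<mapsto> S1] ++ G2" by (rule map_le_trans[OF disj_le_left[OF t_send(5)] leA])
    define H0 where "H0 = \<Gamma>' |` dom \<Gamma>"
    define HC where "HC = \<Gamma>' |` dom [c \<mapsto> S1]"
    define H2 where "H2 = \<Gamma>' |` dom G2"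
    have sb0: "ctx_sub bsub H0 \<Gamma>" unfolding H0_def by (rule restr_sub[OF sb le0])
    have sbC: "ctx_sub bsub HC [c \<mapsto> S1]" unfolding HC_def by (rule restr_sub[OF sb leC])
    have sb2: "ctx_sub bsub H2 G2" unfolding H2_def by (rule restr_sub[OF sb leG2])
    obtain S1' where HC: "HC = [c \<mapsto> S1']" and s11: "subty bsub S1' S1" using ctx_sub_single[OF sbC] by blast
    have gS1': "good S1'" using goodctx_restr[OF g', of "dom [c \<mapsto> S1]"] HC unfolding HC_def goodctx_def
      by (metis fun_upd_same)
    have gS1: "good S1" using goodctx_le[OF g leC] unfolding goodctx_def by simp
    have gI: "good (TInt q [(m, S, T)])" using wf_sess_good[OF t_send(2)] .
    have gST: "good S" "good T" using good_comp_int[OF gI] by auto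
    have s1: "subty bsub S1' (TInt q [(m, S, T)])" by (rule subty_trans[OF tr gS1' gS1 gI s11 t_send(1)])
    have dt: "dtyp bsub valty H2 d S"
      using dtyp_sub[OF tr t_send(3) sb2 _ goodctx_le[OF g leG2] gST(1)] goodctx_restr[OF g'] unfolding H2_def by blast
    have d0: "dom H0 = dom \<Gamma>" using ctx_sub_dom[OF sb0] .
    have d2: "dom H2 = dom G2" using ctx_sub_dom[OF sb2] .
    have dj1: "Defs.disj H0 [c \<mapsto> S1']" using t_send(5) d0 unfolding Defs.disj_def by simp
    have dj2: "Defs.disj H0 H2" using t_send(6) d0 d2 unfolding Defs.disj_def by simp
    have dj3: "Defs.disj [c \<mapsto> S1'] H2" using t_send(7) d2 unfolding Defs.disj_def by simp
    have ty: "typed bsub valty safe \<Theta> (H0(c \<mapsto> T)) P"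
    proof -
      have "goodctx (\<Gamma>(c \<mapsto> T))" using goodctx_upd[OF goodctx_le[OF g le0] gST(2)] .
      moreover have "ctx_sub bsub (H0(c \<mapsto> T)) (\<Gamma>(c \<mapsto> T))" using ctx_sub_upd[OF sb0 subty_refl[OF r gST(2)]] .
      moreover have "goodctx (H0(c \<mapsto> T))" using goodctx_upd[OF goodctx_restr[OF g'] gST(2)] unfolding H0_def .
      ultimately show ?thesis using t_send(9) pc wP by blast
    qed
    have eq: "\<Gamma>' = H0 ++ [c \<mapsto> S1'] ++ H2"
      unfolding HC[symmetric] H0_def HC_def H2_def restr_union
      using ctx_sub_dom[OF sb] restr_dom[of \<Gamma>'] by (simp add: Un_commute Un_left_commute Un_assoc)
    show "typed bsub valty safe \<Theta> \<Gamma>' (Send c q m d P)"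
      unfolding eq by (rule typed.t_send[OF s1 t_send(2) dt t_send(4) dj1 dj2 dj3 ty])
  qed
next
  case (t_recv S1 q ts bs c \<Gamma> \<Theta>)
  show ?case
  proof (intro allI impI)
    fix \<Gamma>' assume pc: "wf_pctx \<Theta>" and g: "goodctx (\<Gamma> ++ [c \<mapsto> S1])" and w: "wf_proc (Recv c q bs)"
      and sb: "ctx_sub bsub \<Gamma>' (\<Gamma> ++ [c \<mapsto> S1])" and g': "goodctx \<Gamma>'"
    have wPs: "\<forall>(m, y, P) \<in> set bs. wf_proc P" using w by (auto elim: wfp_Recv)
    have dj: "Defs.disj \<Gamma> [c \<mapsto> S1]" using t_recv(4) unfolding Defs.disj_def by auto
    have leC: "[c \<mapsto> S1] \<subseteq>\<^sub>m \<Gamma> ++ [c \<mapsto> S1]" by (rule disj_le_right)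
    have le0: "\<Gamma> \<subseteq>\<^sub>m \<Gamma> ++ [c \<mapsto> S1]" by (rule disj_le_left[OF dj])
    define H0 where "H0 = \<Gamma>' |` dom \<Gamma>"
    define HC where "HC = \<Gamma>' |` dom [c \<mapsto> S1]"
    have sb0: "ctx_sub bsub H0 \<Gamma>" unfolding H0_def by (rule restr_sub[OF sb le0])
    have sbC: "ctx_sub bsub HC [c \<mapsto> S1]" unfolding HC_def by (rule restr_sub[OF sb leC])
    obtain S1' where HC: "HC = [c \<mapsto> S1']" and s11: "subty bsub S1' S1" using ctx_sub_single[OF sbC] by blast
    have gS1': "good S1'" using goodctx_restr[OF g', of "dom [c \<mapsto> S1]"] HC unfolding HC_def goodctx_def
      by (metis fun_upd_same)
    have gS1: "good S1" using goodctx_le[OF g leC] unfolding goodctx_def by simp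
    have gE: "good (TExt q ts)" using wf_sess_good[OF t_recv(2)] .
    have s1: "subty bsub S1' (TExt q ts)" by (rule subty_trans[OF tr gS1' gS1 gE s11 t_recv(1)])
    have d0: "dom H0 = dom \<Gamma>" using ctx_sub_dom[OF sb0] .
    have nc: "c \<notin> dom H0" using t_recv(4) d0 by simp
    have key: "CVar y \<notin> dom H0 \<and> CVar y \<noteq> c \<and> typed bsub valty safe \<Theta> (H0(CVar y \<mapsto> S, c \<mapsto> T)) P"
      if mem: "(m, y, P) \<in> set bs" and st: "(m, S, T) \<in> set ts" for m y P S T
    proof -
      have h: "CVar y \<notin> dom \<Gamma> \<and> CVar y \<noteq> c \<and> typed bsub valty safe \<Theta> (\<Gamma>(CVar y \<mapsto> S, c \<mapsto> T)) P \<and>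
          (\<forall>\<Gamma>'. wf_pctx \<Theta> \<longrightarrow> goodctx (\<Gamma>(CVar y \<mapsto> S, c \<mapsto> T)) \<longrightarrow> wf_proc P \<longrightarrow>
            ctx_sub bsub \<Gamma>' (\<Gamma>(CVar y \<mapsto> S, c \<mapsto> T)) \<longrightarrow> goodctx \<Gamma>' \<longrightarrow> typed bsub valty safe \<Theta> \<Gamma>' P)"
        using bspec[OF t_recv(5) mem, unfolded prod.case, rule_format, OF st] .
      have wP: "wf_proc P" using bspec[OF wPs mem] by simp
      have gST: "good S" "good T" using good_comp_ext[OF gE st] by auto
      have "goodctx (\<Gamma>(CVar y \<mapsto> S, c \<mapsto> T))"
        using goodctx_upd[OF goodctx_upd[OF goodctx_le[OF g le0] gST(1)] gST(2)] .
      moreover have "ctx_sub bsub (H0(CVar y \<mapsto> S, c \<mapsto> T)) (\<Gamma>(CVar y \<mapsto> S, c \<mapsto> T))"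
        using ctx_sub_upd[OF ctx_sub_upd[OF sb0 subty_refl[OF r gST(1)]] subty_refl[OF r gST(2)]] .
      moreover have "goodctx (H0(CVar y \<mapsto> S, c \<mapsto> T))"
        using goodctx_upd[OF goodctx_upd[OF goodctx_restr[OF g'] gST(1)] gST(2)] unfolding H0_def .
      ultimately have "typed bsub valty safe \<Theta> (H0(CVar y \<mapsto> S, c \<mapsto> T)) P" using h pc wP by blast
      then show ?thesis using h d0 by simp
    qed
    have key': "\<forall>(m, y, P) \<in> set bs. \<forall>S T. (m, S, T) \<in> set ts \<longrightarrow>
         CVar y \<notin> dom H0 \<and> CVar y \<noteq> c \<and> typed bsub valty safe \<Theta> (H0(CVar y \<mapsto> S, c \<mapsto> T)) P"
      using key by fast
    have eq: "\<Gamma>' = H0 ++ [c \<mapsto> S1']"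
      unfolding HC[symmetric] H0_def HC_def restr_union
      using ctx_sub_dom[OF sb] restr_dom[of \<Gamma>'] by (simp add: Un_commute)
    show "typed bsub valty safe \<Theta> \<Gamma>' (Recv c q bs)"
      unfolding eq by (rule typed.t_recv[OF s1 t_recv(2) t_recv(3) nc key'])
  qed
next
  case (t_def X \<Theta> xs P \<Gamma> Q)
  show ?case
  proof (intro allI impI)
    fix \<Gamma>' assume pc: "wf_pctx \<Theta>" and g: "goodctx \<Gamma>" and w: "wf_proc (Def X xs P Q)"
      and sb: "ctx_sub bsub \<Gamma>' \<Gamma>" and g': "goodctx \<Gamma>'"
    have wx: "\<forall>(x, S) \<in> set xs. wf_sort S" and wQ: "wf_proc Q" using w by (auto elim: wfp_Def)
    have pc': "wf_pctx (\<Theta>(X \<mapsto> map snd xs))"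
      unfolding wf_pctx_def
    proof (intro allI impI ballI)
      fix Y Ss S assume a: "(\<Theta>(X \<mapsto> map snd xs)) Y = Some Ss" "S \<in> set Ss"
      show "wf_sort S"
      proof (cases "Y = X")
        case True
        then have "S \<in> set (map snd xs)" using a by simp
        then show ?thesis using wx by auto
      next
        case False
        then show ?thesis using a pc unfolding wf_pctx_def by auto
      qed
    qed
    have "typed bsub valty safe (\<Theta>(X \<mapsto> map snd xs)) \<Gamma>' Q" using t_def(5) pc' g wQ sb g' by blast
    then show "typed bsub valty safe \<Theta> \<Gamma>' (Def X xs P Q)" by (rule typed.t_def[OF t_def(1) t_def(2)])
  qed
next
  case (t_call \<Theta> X Ss ds Gs G0)
  show ?case
  proof (intro allI impI)
    fix \<Gamma>' assume pc: "wf_pctx \<Theta>" and g: "goodctx (foldl (++) G0 Gs)"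
      and sb: "ctx_sub bsub \<Gamma>' (foldl (++) G0 Gs)" and g': "goodctx \<Gamma>'"
    define H0 where "H0 = \<Gamma>' |` dom G0"
    define Hs where "Hs = map (\<lambda>G. \<Gamma>' |` dom G) Gs"
    have le: "G \<subseteq>\<^sub>m foldl (++) G0 Gs" if "G \<in> set (G0 # Gs)" for G
      using le_foldl[OF t_call(6) that] .
    have sbG: "ctx_sub bsub (\<Gamma>' |` dom G) G" if "G \<in> set (G0 # Gs)" for G
      using restr_sub[OF sb le[OF that]] .
    have gG: "goodctx G" if "G \<in> set (G0 # Gs)" for G
      using goodctx_le[OF g le[OF that]] .
    have e0: "end_ctx bsub H0"
      using end_sub[OF tr sbG[of G0] t_call(4) _ gG[of G0]] goodctx_restr[OF g'] unfolding H0_def by simp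
    have lenH: "length Hs = length Ss" using t_call(3) unfolding Hs_def by simp
    have dt: "\<forall>i<length Ss. dtyp bsub valty (Hs ! i) (ds ! i) (Ss ! i) \<and> \<not> subty bsub (Ss ! i) TEnd"
    proof (intro allI impI)
      fix i assume i: "i < length Ss"
      then have mem: "Gs ! i \<in> set (G0 # Gs)" using t_call(3) by simp
      have gS: "good (Ss ! i)" using pc t_call(1) i wf_sort_good unfolding wf_pctx_def by (meson nth_mem)
      have Hi: "Hs ! i = \<Gamma>' |` dom (Gs ! i)" unfolding Hs_def using t_call(3) i by simp
      have "dtyp bsub valty (Hs ! i) (ds ! i) (Ss ! i)"
        unfolding Hi using dtyp_sub[OF tr _ sbG[OF mem] goodctx_restr[OF g'] gG[OF mem] gS] t_call(5) i by blast
      then show "dtyp bsub valty (Hs ! i) (ds ! i) (Ss ! i) \<and> \<not> subty bsub (Ss ! i) TEnd" using t_call(5) i by blast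
    qed
    have domG: "dom (\<Gamma>' |` dom G) = dom G" if "G \<in> set (G0 # Gs)" for G
      using ctx_sub_dom[OF sbG[OF that]] .
    have "map dom (H0 # Hs) = map dom (G0 # Gs)"
      unfolding H0_def Hs_def using domG by (simp add: comp_def)
    then have pd: "pairwise_disj (H0 # Hs)" using pd_dom t_call(6) by blast
    have ty: "typed bsub valty safe \<Theta> (foldl (++) H0 Hs) (Call X ds)"
      by (rule typed.t_call[where \<Theta>=\<Theta> and X=X, OF t_call(1) t_call(2) lenH e0 dt pd])
    have eq: "foldl (++) H0 Hs = \<Gamma>'"
      unfolding H0_def Hs_def foldl_restr
      using ctx_sub_dom[OF sb] dom_foldl[of G0 Gs] restr_dom[of \<Gamma>'] by simp
    show "typed bsub valty safe \<Theta> \<Gamma>' (Call X ds)" using ty unfolding eq .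
  qed
next
  case (t_res s G \<Gamma> \<Theta> P)
  show ?case
  proof (intro allI impI)
    fix \<Gamma>' assume pc: "wf_pctx \<Theta>" and g: "goodctx \<Gamma>" and w: "wf_proc (Res s G P)"
      and sb: "ctx_sub bsub \<Gamma>' \<Gamma>" and g': "goodctx \<Gamma>'"
    have wG: "\<forall>T \<in> ran G. wf_sess T" and wP: "wf_proc P" using w by (auto elim: wfp_Res)
    have gs: "goodctx (sctx s G)" unfolding goodctx_def
    proof (intro allI impI)
      fix c S assume a: "sctx s G c = Some S"
      then obtain p where "G p = Some S" unfolding sctx_def by (auto split: chan.splits if_splits)
      then have "S \<in> ran G" by (rule ranI)
      then show "good S" using wG wf_sess_good by blast
    qed
    have "typed bsub valty safe \<Theta> (\<Gamma>' ++ sctx s G) P"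
      using t_res(4) pc goodctx_add[OF g gs] wP ctx_sub_add[OF sb ctx_sub_refl[OF r gs]] goodctx_add[OF g' gs]
      by blast
    moreover have "\<forall>p. CEp s p \<notin> dom \<Gamma>'" using t_res(2) ctx_sub_dom[OF sb] by simp
    ultimately show "typed bsub valty safe \<Theta> \<Gamma>' (Res s G P)" using typed.t_res[where safe=safe and s=s and G=G, OF t_res(1)] by blast
  qed
qed

theorem mainTheorem4:
  fixes bsub :: "'b \<Rightarrow> 'b \<Rightarrow> bool"
    and valty :: "'v \<Rightarrow> 'b \<Rightarrow> bool"
    and safe :: "sess \<Rightarrow> 'b ctx \<Rightarrow> bool"
    and \<Theta> :: "'b pctx" and \<Gamma> \<Gamma>' :: "'b ctx" and P :: "('b, 'v) proc"
  assumes "reflp bsub" and "transp bsub"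
    and "wf_pctx \<Theta>" and "wf_ctx \<Gamma>" and "wf_ctx \<Gamma>'" and "wf_proc P"
    and "typed bsub valty safe \<Theta> \<Gamma> P"
    and "ctx_sub bsub \<Gamma>' \<Gamma>"
  shows "typed bsub valty safe \<Theta> \<Gamma>' P"
  using typed_sub[OF assms(1,2) assms(7)] assms(3,6,8) wf_ctx_good[OF assms(4)] wf_ctx_good[OF assms(5)]
  by blast


end
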